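(* Let $G$ be a finite group and let $\phi=a_1\chi_1+\cdots+a_q\chi_q$ be a real-valued virtual character of $G$, where $a_i\in\mathbb{R}$ and $\chi_i$ are irreducible complex characters of $G$ with $n_i=\chi_i(1)$. Then for every $g\in G$, $$\mathbb{E}(\xi_{g,\phi})=\sum_{i=1}^q\frac{a_i}{n_i^2}\chi_i(g),$$ and if $\phi$ is real-valued and non-negative, then for every $g\in G$, $$c(g)\le\frac{\mathbb{E}(\xi_{g,\phi})}{\phi(1)}=\frac{(a_1/n_1^2)\chi_1(g)+\cdots+(a_q/n_q^2)\chi_q(g)}{a_1n_1+\cdots+a_qn_q}.$$
   Context: $G$ is a finite group of order $m$; $G\times G$ carries the uniform probability measure and $\mathbb{E}$ is expectation with respect to it. $c(g)=|\{(x,y)\in G\times G:[x,y]=g\}|/|G|^2$. For $g\in G$, $\xi_{g,\phi}(a,b)=\mathrm{Re}\big(\phi([a,b]^{-1}g)\big)$ for $(a,b)\in G\times G$. A virtual character $\phi=\sum_{\chi\in\mathrm{Irr}(G)}a_\chi\chi$ is non-negative if (a) $\mathrm{Re}(\phi(h))\ge0$ for all $h\in G$, and (b) all $a_\chi$ are non-negative reals, not all zero. *)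

theory Defs
  imports "HOL-Algebra.Group" "Jordan_Normal_Form.Matrix"
begin

definition commutator :: "('a, 'b) monoid_scheme \<Rightarrow> 'a \<Rightarrow> 'a \<Rightarrow> 'a" where
  "commutator G x y = inv\<^bsub>G\<^esub> x \<otimes>\<^bsub>G\<^esub> inv\<^bsub>G\<^esub> y \<otimes>\<^bsub>G\<^esub> x \<otimes>\<^bsub>G\<^esub> y"

definition mat_trace :: "complex mat \<Rightarrow> complex" where
  "mat_trace A = (\<Sum>i<dim_row A. A $$ (i, i))"

text \<open>A complex representation of degree n: homomorphism from G into n x n complex matrices
  (the image consists automatically of invertible matrices).\<close>
definition is_rep :: "('a, 'b) monoid_scheme \<Rightarrow> nat \<Rightarrow> ('a \<Rightarrow> complex mat) \<Rightarrow> bool" where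
  "is_rep G n \<rho> \<longleftrightarrow> 0 < n \<and> (\<forall>g\<in>carrier G. \<rho> g \<in> carrier_mat n n) \<and>
     \<rho> \<one>\<^bsub>G\<^esub> = 1\<^sub>m n \<and>
     (\<forall>g\<in>carrier G. \<forall>h\<in>carrier G. \<rho> (g \<otimes>\<^bsub>G\<^esub> h) = \<rho> g * \<rho> h)"

definition is_subspace :: "nat \<Rightarrow> complex vec set \<Rightarrow> bool" where
  "is_subspace n W \<longleftrightarrow> W \<subseteq> carrier_vec n \<and> 0\<^sub>v n \<in> W \<and>
     (\<forall>v\<in>W. \<forall>w\<in>W. v + w \<in> W) \<and> (\<forall>c. \<forall>v\<in>W. c \<cdot>\<^sub>v v \<in> W)"

definition irreducible_rep :: "('a, 'b) monoid_scheme \<Rightarrow> nat \<Rightarrow> ('a \<Rightarrow> complex mat) \<Rightarrow> bool" where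
  "irreducible_rep G n \<rho> \<longleftrightarrow> is_rep G n \<rho> \<and>
     (\<forall>W. is_subspace n W \<and> (\<forall>g\<in>carrier G. \<forall>v\<in>W. \<rho> g *\<^sub>v v \<in> W)
        \<longrightarrow> W = {0\<^sub>v n} \<or> W = carrier_vec n)"

definition Irr :: "('a, 'b) monoid_scheme \<Rightarrow> ('a \<Rightarrow> complex) set" where
  "Irr G = {\<chi>. \<exists>n \<rho>. irreducible_rep G n \<rho> \<and>
              \<chi> = (\<lambda>g. if g \<in> carrier G then mat_trace (\<rho> g) else 0)}"

definition comm_prob :: "('a, 'b) monoid_scheme \<Rightarrow> 'a \<Rightarrow> real" where
  "comm_prob G g = real (card {(x, y). x \<in> carrier G \<and> y \<in> carrier G \<and> commutator G x y = g})
                    / real (card (carrier G)) ^ 2"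

text \<open>Expectation of xi_{g,phi}(a,b) = Re(phi([a,b]^{-1} g)) under the uniform measure on G x G.\<close>
definition exp_xi :: "('a, 'b) monoid_scheme \<Rightarrow> ('a \<Rightarrow> complex) \<Rightarrow> 'a \<Rightarrow> real" where
  "exp_xi G \<phi> g = (\<Sum>a\<in>carrier G. \<Sum>b\<in>carrier G.
        Re (\<phi> (inv\<^bsub>G\<^esub> (commutator G a b) \<otimes>\<^bsub>G\<^esub> g))) / real (card (carrier G)) ^ 2"

end

theory Submission imports Defs "Jordan_Normal_Form.Char_Poly"
begin

lemma assoc4: assumes "A \<in> carrier_mat n n" "B \<in> carrier_mat n n" "C \<in> carrier_mat n n" "D \<in> carrier_mat n n"
  shows "A * (B * C * D) = A * B * C * D"
  using assms by (simp add: assoc_mult_mat[of _ n n _ n _ n] mult_carrier_mat)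

lemma mult_if0: "x * (if P then y else 0) = (if P then x * y else (0::complex))" by simp

lemma delta2: assumes "i < (n::nat)"
  shows "(\<Sum>l<n. \<Sum>j<n. if i = l then f l j else (0::complex)) = (\<Sum>j<n. f i j)"
proof -
  have "(\<Sum>l<n. \<Sum>j<n. if i = l then f l j else (0::complex)) = (\<Sum>l<n. if i = l then (\<Sum>j<n. f l j) else 0)"
    by (intro sum.cong refl) auto
  also have "\<dots> = (\<Sum>j<n. f i j)" by (subst sum.delta') (use assms in auto)
  finally show ?thesis .
qed

locale irrep =
  fixes G (structure) and n :: nat and \<rho> :: "'a \<Rightarrow> complex mat"
  assumes grp: "group G" and fin: "finite (carrier G)" and irr: "irreducible_rep G n \<rho>"
begin

lemma rep: "is_rep G n \<rho>" using irr unfolding irreducible_rep_def by auto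
lemma npos: "0 < n" using rep unfolding is_rep_def by auto
lemma car[simp]: "g \<in> carrier G \<Longrightarrow> \<rho> g \<in> carrier_mat n n" using rep unfolding is_rep_def by auto
lemma dimr[simp]: assumes "g \<in> carrier G" shows "dim_row (\<rho> g) = n" using car[OF assms] by auto
lemma dimc[simp]: assumes "g \<in> carrier G" shows "dim_col (\<rho> g) = n" using car[OF assms] by auto
lemma hom: "g \<in> carrier G \<Longrightarrow> h \<in> carrier G \<Longrightarrow> \<rho> (g \<otimes> h) = \<rho> g * \<rho> h" using rep unfolding is_rep_def by auto
lemma one: "\<rho> \<one> = 1\<^sub>m n" using rep unfolding is_rep_def by auto

lemma schur:
  assumes M: "M \<in> carrier_mat n n" and comm: "\<forall>g\<in>carrier G. M * \<rho> g = \<rho> g * M"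
  shows "\<exists>c. \<forall>i<n. \<forall>j<n. M $$ (i,j) = (if i = j then c else 0)"
proof -
  obtain as where cp: "char_poly M = (\<Prod> a \<leftarrow> as. [:- a, 1:])" and len: "length as = n"
    using char_poly_factorized[OF M] by auto
  have "as \<noteq> []" using len npos by auto
  hence "hd as \<in> set as" by simp
  define c where "c = hd as"
  have "poly (char_poly M) c = 0" unfolding cp c_def by (rule linear_poly_root) fact
  hence "eigenvalue M c" using eigenvalue_root_char_poly[OF M] by simp
  then obtain v where v: "v \<in> carrier_vec n" "v \<noteq> 0\<^sub>v n" "M *\<^sub>v v = c \<cdot>\<^sub>v v"
    unfolding eigenvalue_def eigenvector_def using M by auto
  define W where "W = {w \<in> carrier_vec n. M *\<^sub>v w = c \<cdot>\<^sub>v w}"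
  have sub: "is_subspace n W" unfolding is_subspace_def W_def
  proof (intro conjI ballI allI)
    show "0\<^sub>v n \<in> {w \<in> carrier_vec n. M *\<^sub>v w = c \<cdot>\<^sub>v w}" using M by auto
    fix x y assume x: "x \<in> {w \<in> carrier_vec n. M *\<^sub>v w = c \<cdot>\<^sub>v w}"
      and y: "y \<in> {w \<in> carrier_vec n. M *\<^sub>v w = c \<cdot>\<^sub>v w}"
    thus "x + y \<in> {w \<in> carrier_vec n. M *\<^sub>v w = c \<cdot>\<^sub>v w}"
      using M by (auto simp: mult_add_distrib_mat_vec smult_add_distrib_vec)
  next
    fix d x assume x: "x \<in> {w \<in> carrier_vec n. M *\<^sub>v w = c \<cdot>\<^sub>v w}"
    thus "d \<cdot>\<^sub>v x \<in> {w \<in> carrier_vec n. M *\<^sub>v w = c \<cdot>\<^sub>v w}"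
      using M by (auto simp: mult_mat_vec smult_smult_assoc mult.commute)
  qed auto
  have inv: "\<forall>g\<in>carrier G. \<forall>w\<in>W. \<rho> g *\<^sub>v w \<in> W"
  proof (intro ballI)
    fix g w assume g: "g \<in> carrier G" and w: "w \<in> W"
    have wc: "w \<in> carrier_vec n" using w unfolding W_def by auto
    have "M *\<^sub>v (\<rho> g *\<^sub>v w) = (M * \<rho> g) *\<^sub>v w" using assoc_mult_mat_vec[OF M car[OF g] wc] by simp
    also have "\<dots> = (\<rho> g * M) *\<^sub>v w" using comm g by simp
    also have "\<dots> = \<rho> g *\<^sub>v (M *\<^sub>v w)" using assoc_mult_mat_vec[OF car[OF g] M wc] by simp
    also have "\<dots> = c \<cdot>\<^sub>v (\<rho> g *\<^sub>v w)" using w mult_mat_vec[OF car[OF g] wc] unfolding W_def by auto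
    finally show "\<rho> g *\<^sub>v w \<in> W" using mult_mat_vec_carrier[OF car[OF g] wc] unfolding W_def by auto
  qed
  have "W = {0\<^sub>v n} \<or> W = carrier_vec n" using irr sub inv unfolding irreducible_rep_def by blast
  moreover have "v \<in> W" using v unfolding W_def by auto
  ultimately have W: "W = carrier_vec n" using v by auto
  show ?thesis
  proof (intro exI allI impI)
    fix i j assume i: "i < n" and j: "j < n"
    have "unit_vec n j \<in> W" using W by simp
    hence "M *\<^sub>v unit_vec n j = c \<cdot>\<^sub>v unit_vec n j" unfolding W_def by auto
    hence "(M *\<^sub>v unit_vec n j) $ i = (c \<cdot>\<^sub>v unit_vec n j) $ i" by simp
    thus "M $$ (i,j) = (if i = j then c else 0)" using M i j by auto
  qed
qed

lemma inv_car[simp]: "a \<in> carrier G \<Longrightarrow> inv a \<in> carrier G" using grp by (simp add: group.inv_closed)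
lemma mult_car[simp]: "a \<in> carrier G \<Longrightarrow> b \<in> carrier G \<Longrightarrow> a \<otimes> b \<in> carrier G"
  using grp by (simp add: monoid.m_closed group.is_monoid)

lemma reindex_r: assumes g: "g \<in> carrier G"
  shows "(\<Sum>a\<in>carrier G. H (a \<otimes> g)) = (\<Sum>c\<in>carrier G. H c)"
proof (rule sum.reindex_bij_witness[of _ "\<lambda>c. c \<otimes> inv g" "\<lambda>a. a \<otimes> g"])
  fix a assume "a \<in> carrier G" thus "a \<otimes> g \<otimes> inv g = a" using grp g
    by (simp add: group.inv_solve_right' group.is_monoid monoid.m_closed)
next
  fix a assume "a \<in> carrier G" thus "a \<otimes> inv g \<otimes> g = a" using grp g
    by (metis group.inv_closed group.inv_inv group.inv_solve_right' group.is_monoid monoid.m_closed)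
qed (use g in auto)

lemma rho_inv: "a \<in> carrier G \<Longrightarrow> \<rho> a * \<rho> (inv a) = 1\<^sub>m n"
  using hom[of a "inv a"] one grp by (simp add: group.r_inv)
lemma rho_inv': "a \<in> carrier G \<Longrightarrow> \<rho> (inv a) * \<rho> a = 1\<^sub>m n"
  using hom[of "inv a" a] one grp by (simp add: group.l_inv)

end

definition msum :: "nat \<Rightarrow> ('b \<Rightarrow> complex mat) \<Rightarrow> 'b set \<Rightarrow> complex mat" where
  "msum n f S = mat n n (\<lambda>(i,j). \<Sum>x\<in>S. f x $$ (i,j))"

lemma msum_car[simp]: "msum n f S \<in> carrier_mat n n" unfolding msum_def by simp
lemma msum_dim[simp]: "dim_row (msum n f S) = n" "dim_col (msum n f S) = n" unfolding msum_def by simp_all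

lemma msum_mult_right: assumes "\<And>x. x \<in> S \<Longrightarrow> f x \<in> carrier_mat n n" and B: "B \<in> carrier_mat n n"
  shows "msum n f S * B = msum n (\<lambda>x. f x * B) S"
proof (rule eq_matI)
  fix i j assume i: "i < dim_row (msum n (\<lambda>x. f x * B) S)" and j: "j < dim_col (msum n (\<lambda>x. f x * B) S)"
  have "(msum n f S * B) $$ (i,j) = (\<Sum>k<n. (\<Sum>x\<in>S. f x $$ (i,k)) * B $$ (k,j))"
    using i j B unfolding msum_def by (auto simp: scalar_prod_def lessThan_atLeast0)
  also have "\<dots> = (\<Sum>x\<in>S. \<Sum>k<n. f x $$ (i,k) * B $$ (k,j))"
    by (simp add: sum_distrib_right sum.swap[of _ S])
  also have "\<dots> = msum n (\<lambda>x. f x * B) S $$ (i,j)"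
  proof -
    have "(\<Sum>k<n. f x $$ (i,k) * B $$ (k,j)) = (f x * B) $$ (i,j)" if x: "x \<in> S" for x
      using i j B assms(1)[OF x] by (auto simp: scalar_prod_def lessThan_atLeast0)
    thus ?thesis using i j unfolding msum_def by (auto intro!: sum.cong)
  qed
  finally show "(msum n f S * B) $$ (i,j) = msum n (\<lambda>x. f x * B) S $$ (i,j)" .
qed (use B in auto)

lemma msum_mult_left: assumes "\<And>x. x \<in> S \<Longrightarrow> f x \<in> carrier_mat n n" and B: "B \<in> carrier_mat n n"
  shows "B * msum n f S = msum n (\<lambda>x. B * f x) S"
proof (rule eq_matI)
  fix i j assume i: "i < dim_row (msum n (\<lambda>x. B * f x) S)" and j: "j < dim_col (msum n (\<lambda>x. B * f x) S)"
  have "(B * msum n f S) $$ (i,j) = (\<Sum>k<n. B $$ (i,k) * (\<Sum>x\<in>S. f x $$ (k,j)))"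
    using i j B unfolding msum_def by (auto simp: scalar_prod_def lessThan_atLeast0)
  also have "\<dots> = (\<Sum>x\<in>S. \<Sum>k<n. B $$ (i,k) * f x $$ (k,j))"
    by (simp add: sum_distrib_left sum.swap[of _ S])
  also have "\<dots> = msum n (\<lambda>x. B * f x) S $$ (i,j)"
  proof -
    have "(\<Sum>k<n. B $$ (i,k) * f x $$ (k,j)) = (B * f x) $$ (i,j)" if x: "x \<in> S" for x
      using i j B assms(1)[OF x] by (auto simp: scalar_prod_def lessThan_atLeast0)
    thus ?thesis using i j unfolding msum_def by (auto intro!: sum.cong)
  qed
  finally show "(B * msum n f S) $$ (i,j) = msum n (\<lambda>x. B * f x) S $$ (i,j)" .
qed (use B in auto)

lemma msum_cong: "(\<And>x. x \<in> S \<Longrightarrow> f x = g x) \<Longrightarrow> msum n f S = msum n g S"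
  unfolding msum_def by (auto intro!: sum.cong)

lemma trace_comm: assumes "A \<in> carrier_mat n n" "B \<in> carrier_mat n n"
  shows "mat_trace (A * B) = mat_trace (B * A)"
  using assms unfolding mat_trace_def
  by (auto simp: scalar_prod_def lessThan_atLeast0[symmetric] mult.commute intro: sum.swap)

context irrep begin

definition MX where "MX X = msum n (\<lambda>a. \<rho> (inv a) * X * \<rho> a) (carrier G)"

lemma MX_comm: assumes X: "X \<in> carrier_mat n n" and g: "g \<in> carrier G"
  shows "MX X * \<rho> g = \<rho> g * MX X"
proof -
  have "MX X * \<rho> g = msum n (\<lambda>a. \<rho> (inv a) * X * \<rho> a * \<rho> g) (carrier G)"
    unfolding MX_def using X g by (intro msum_mult_right) (auto intro!: mult_carrier_mat)
  also have "\<dots> = msum n (\<lambda>a. \<rho> (inv a) * X * \<rho> (a \<otimes> g)) (carrier G)"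
  proof (intro msum_cong)
    fix x assume x: "x \<in> carrier G"
    show "\<rho> (inv x) * X * \<rho> x * \<rho> g = \<rho> (inv x) * X * \<rho> (x \<otimes> g)"
      using X g x by (simp add: hom, subst assoc_mult_mat[of "\<rho> (inv x) * X" n n _ n _ n], auto)
  qed
  also have "\<dots> = msum n (\<lambda>c. \<rho> g * (\<rho> (inv c) * X * \<rho> c)) (carrier G)"
  proof -
    have "(\<Sum>a\<in>carrier G. (\<rho> (inv a) * X * \<rho> (a \<otimes> g)) $$ (i,j))
       = (\<Sum>c\<in>carrier G. (\<rho> g * (\<rho> (inv c) * X * \<rho> c)) $$ (i,j))" for i j
    proof -
      have "(\<Sum>a\<in>carrier G. (\<rho> (inv a) * X * \<rho> (a \<otimes> g)) $$ (i,j))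
          = (\<Sum>a\<in>carrier G. (\<rho> g * (\<rho> (inv (a \<otimes> g)) * X * \<rho> (a \<otimes> g))) $$ (i,j))"
      proof (intro sum.cong refl)
        fix a assume a: "a \<in> carrier G"
        have "\<rho> g * \<rho> (inv (a \<otimes> g)) = \<rho> (inv a)"
          using grp a g by (simp add: hom[symmetric] group.inv_mult_group monoid.m_assoc[symmetric] group.is_monoid group.r_inv)
        moreover have "\<rho> g * (\<rho> (inv (a \<otimes> g)) * X * \<rho> (a \<otimes> g)) = (\<rho> g * \<rho> (inv (a \<otimes> g))) * X * \<rho> (a \<otimes> g)"
          using a g X by (intro assoc4) auto
        ultimately show "(\<rho> (inv a) * X * \<rho> (a \<otimes> g)) $$ (i,j) = (\<rho> g * (\<rho> (inv (a \<otimes> g)) * X * \<rho> (a \<otimes> g))) $$ (i,j)"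
          by simp
      qed
      also have "\<dots> = (\<Sum>c\<in>carrier G. (\<rho> g * (\<rho> (inv c) * X * \<rho> c)) $$ (i,j))"
        by (rule reindex_r[OF g, where H = "\<lambda>c. (\<rho> g * (\<rho> (inv c) * X * \<rho> c)) $$ (i,j)"])
      finally show ?thesis .
    qed
    thus ?thesis unfolding msum_def by simp
  qed
  also have "\<dots> = \<rho> g * MX X"
    unfolding MX_def using X g by (intro msum_mult_left[symmetric]) (auto intro!: mult_carrier_mat)
  finally show ?thesis .
qed

lemma MX_trace: assumes X: "X \<in> carrier_mat n n"
  shows "mat_trace (MX X) = of_nat (card (carrier G)) * mat_trace X"
proof -
  have "mat_trace (MX X) = (\<Sum>a\<in>carrier G. mat_trace (\<rho> (inv a) * X * \<rho> a))"
    unfolding MX_def msum_def mat_trace_def by (simp add: sum.swap[of _ "carrier G"])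
  also have "\<dots> = (\<Sum>a\<in>carrier G. mat_trace X)"
  proof (intro sum.cong refl)
    fix a assume a: "a \<in> carrier G"
    have "mat_trace (\<rho> (inv a) * X * \<rho> a) = mat_trace (\<rho> a * (\<rho> (inv a) * X))"
      using a X by (intro trace_comm) auto
    also have "\<rho> a * (\<rho> (inv a) * X) = X"
      using a X by (simp add: assoc_mult_mat[of _ n n _ n _ n, symmetric] rho_inv)
    finally show "mat_trace (\<rho> (inv a) * X * \<rho> a) = mat_trace X" .
  qed
  finally show ?thesis by simp
qed

lemma MX_scalar: assumes X: "X \<in> carrier_mat n n" and i: "i < n" and j: "j < n"
  shows "MX X $$ (i,j) = (if i = j then of_nat (card (carrier G)) * mat_trace X / of_nat n else 0)"
proof -
  obtain c where c: "\<forall>i<n. \<forall>j<n. MX X $$ (i,j) = (if i = j then c else 0)"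
    using schur[of "MX X"] MX_comm[OF X] unfolding MX_def by auto
  have "mat_trace (MX X) = (\<Sum>k<n. c)" unfolding mat_trace_def MX_def using c[unfolded MX_def]
    by (auto intro!: sum.cong)
  hence "of_nat n * c = of_nat (card (carrier G)) * mat_trace X" using MX_trace[OF X] by simp
  hence "c = of_nat (card (carrier G)) * mat_trace X / of_nat n" using npos by (simp add: field_simps)
  thus ?thesis using c i j by auto
qed


abbreviation "N \<equiv> card (carrier G)"

lemma key: assumes "k < n" "l < n" "m < n" "p < n"
  shows "(\<Sum>a\<in>carrier G. \<rho> (inv a) $$ (k,l) * \<rho> a $$ (m,p))
     = (if l = m then if k = p then of_nat N / of_nat n else 0 else 0)"
proof -
  define X :: "complex mat" where "X = mat n n (\<lambda>(i,j). if i = l \<and> j = m then 1 else 0)"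
  have X: "X \<in> carrier_mat n n" unfolding X_def by simp
  have e: "(\<rho> (inv a) * X * \<rho> a) $$ (k,p) = \<rho> (inv a) $$ (k,l) * \<rho> a $$ (m,p)"
    if a: "a \<in> carrier G" for a
  proof -
    have 1: "(\<rho> (inv a) * X) $$ (k,j) = (if j = m then \<rho> (inv a) $$ (k,l) else 0)" if j: "j < n" for j
      using a j assms unfolding X_def by (auto simp: scalar_prod_def if_distrib cong: if_cong)
    have "(\<rho> (inv a) * X * \<rho> a) $$ (k,p) = (\<Sum>j<n. (\<rho> (inv a) * X) $$ (k,j) * \<rho> a $$ (j,p))"
      using a X assms by (simp add: scalar_prod_def lessThan_atLeast0)
    also have "\<dots> = (\<Sum>j<n. (if j = m then \<rho> (inv a) $$ (k,l) * \<rho> a $$ (j,p) else 0))"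
      by (intro sum.cong refl) (simp add: 1)
    also have "\<dots> = \<rho> (inv a) $$ (k,l) * \<rho> a $$ (m,p)" using assms by simp
    finally show ?thesis .
  qed
  have tr: "mat_trace X = (if l = m then 1 else 0)"
    unfolding mat_trace_def X_def using assms by (cases "l = m") (auto intro!: sum.neutral)
  have "(\<Sum>a\<in>carrier G. \<rho> (inv a) $$ (k,l) * \<rho> a $$ (m,p)) = MX X $$ (k,p)"
    unfolding MX_def msum_def using assms e by simp
  also have "\<dots> = (if k = p then of_nat N * mat_trace X / of_nat n else 0)"
    using MX_scalar[OF X] assms by simp
  finally show ?thesis using tr by simp
qed

lemma trace4: assumes "A \<in> carrier_mat n n" "B \<in> carrier_mat n n" "C \<in> carrier_mat n n" "D \<in> carrier_mat n n"
  shows "mat_trace (A * B * C * D) = (\<Sum>i<n. \<Sum>l<n. \<Sum>j<n. \<Sum>k<n. A $$ (i,j) * B $$ (j,k) * C $$ (k,l) * D $$ (l,i))"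
  using assms unfolding mat_trace_def
  by (simp add: scalar_prod_def lessThan_atLeast0 sum_distrib_right sum_distrib_left mult.assoc)

lemma trace2: assumes "A \<in> carrier_mat n n" "B \<in> carrier_mat n n"
  shows "mat_trace (A * B) = (\<Sum>m<n. \<Sum>l<n. A $$ (m,l) * B $$ (l,m))"
  using assms unfolding mat_trace_def
  by (simp add: scalar_prod_def lessThan_atLeast0)


lemma step1: assumes Z: "Z \<in> carrier_mat n n" and W: "W \<in> carrier_mat n n"
  shows "(\<Sum>b\<in>carrier G. mat_trace (\<rho> (inv b) * Z * \<rho> b * W))
       = of_nat N / of_nat n * mat_trace Z * mat_trace W"
proof -
  have "(\<Sum>b\<in>carrier G. mat_trace (\<rho> (inv b) * Z * \<rho> b * W))
     = (\<Sum>b\<in>carrier G. \<Sum>i<n. \<Sum>l<n. \<Sum>j<n. \<Sum>k<n. \<rho> (inv b) $$ (i,j) * Z $$ (j,k) * \<rho> b $$ (k,l) * W $$ (l,i))"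
    using Z W by (intro sum.cong refl trace4) auto
  also have "\<dots> = (\<Sum>i<n. \<Sum>l<n. \<Sum>j<n. \<Sum>k<n. \<Sum>b\<in>carrier G. \<rho> (inv b) $$ (i,j) * Z $$ (j,k) * \<rho> b $$ (k,l) * W $$ (l,i))"
    by (simp add: sum.swap[of _ "carrier G"])
  also have "\<dots> = (\<Sum>i<n. \<Sum>l<n. \<Sum>j<n. \<Sum>k<n. Z $$ (j,k) * W $$ (l,i) * (\<Sum>b\<in>carrier G. \<rho> (inv b) $$ (i,j) * \<rho> b $$ (k,l)))"
    by (simp add: sum_distrib_left mult_ac)
  also have "\<dots> = (\<Sum>i<n. \<Sum>l<n. \<Sum>j<n. \<Sum>k<n. Z $$ (j,k) * W $$ (l,i) * (if j = k then if i = l then of_nat N / of_nat n else 0 else 0))"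
    by (intro sum.cong refl, subst key) auto
  also have "\<dots> = (\<Sum>i<n. \<Sum>l<n. \<Sum>j<n. if i = l then Z $$ (j,j) * W $$ (l,i) * (of_nat N / of_nat n) else 0)"
    by (intro sum.cong refl) (simp add: mult_if0 sum.delta)
  also have "\<dots> = (\<Sum>i<n. \<Sum>j<n. Z $$ (j,j) * W $$ (i,i) * (of_nat N / of_nat n))"
    by (intro sum.cong refl delta2) auto
  also have "\<dots> = of_nat N / of_nat n * mat_trace Z * mat_trace W"
  proof -
    have "(\<Sum>i<n. \<Sum>j<n. Z $$ (j,j) * W $$ (i,i) * (of_nat N / of_nat n)) = of_nat N / of_nat n * ((\<Sum>i<n. W $$ (i,i)) * (\<Sum>j<n. Z $$ (j,j)))"
      by (subst sum.swap) (simp add: sum_product sum_distrib_left mult_ac)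
    thus ?thesis using Z W unfolding mat_trace_def by (simp add: mult_ac)
  qed
  finally show ?thesis .
qed

lemma step2: assumes Y: "Y \<in> carrier_mat n n"
  shows "(\<Sum>a\<in>carrier G. mat_trace (\<rho> (inv a)) * mat_trace (\<rho> a * Y))
       = of_nat N / of_nat n * mat_trace Y"
proof -
  have "(\<Sum>a\<in>carrier G. mat_trace (\<rho> (inv a)) * mat_trace (\<rho> a * Y))
     = (\<Sum>a\<in>carrier G. \<Sum>m<n. \<Sum>l<n. \<Sum>k<n. \<rho> (inv a) $$ (k,k) * \<rho> a $$ (m,l) * Y $$ (l,m))"
  proof (intro sum.cong refl)
    fix a assume a: "a \<in> carrier G"
    show "mat_trace (\<rho> (inv a)) * mat_trace (\<rho> a * Y) = (\<Sum>m<n. \<Sum>l<n. \<Sum>k<n. \<rho> (inv a) $$ (k,k) * \<rho> a $$ (m,l) * Y $$ (l,m))"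
      unfolding trace2[OF car[OF a] Y] using a unfolding mat_trace_def
      by (simp add: sum_distrib_left sum_distrib_right mult_ac)
  qed
  also have "\<dots> = (\<Sum>m<n. \<Sum>l<n. \<Sum>k<n. \<Sum>a\<in>carrier G. \<rho> (inv a) $$ (k,k) * \<rho> a $$ (m,l) * Y $$ (l,m))"
    by (simp add: sum.swap[of _ "carrier G"])
  also have "\<dots> = (\<Sum>m<n. \<Sum>l<n. \<Sum>k<n. Y $$ (l,m) * (\<Sum>a\<in>carrier G. \<rho> (inv a) $$ (k,k) * \<rho> a $$ (m,l)))"
    by (simp add: sum_distrib_left mult_ac)
  also have "\<dots> = (\<Sum>m<n. \<Sum>l<n. \<Sum>k<n. Y $$ (l,m) * (if k = m then if k = l then of_nat N / of_nat n else 0 else 0))"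
    by (intro sum.cong refl, subst key) auto
  also have "\<dots> = (\<Sum>m<n. \<Sum>l<n. if m = l then Y $$ (l,m) * (of_nat N / of_nat n) else 0)"
    by (intro sum.cong refl) (simp add: mult_if0 sum.delta)
  also have "\<dots> = (\<Sum>k<n. Y $$ (k,k) * (of_nat N / of_nat n))"
    by (intro sum.cong refl) (simp add: sum.delta)
  also have "\<dots> = of_nat N / of_nat n * mat_trace Y"
    using Y unfolding mat_trace_def by (simp add: sum_distrib_left sum_distrib_right mult_ac)
  finally show ?thesis .
qed


lemma comm_inv: assumes a: "a \<in> carrier G" and b: "b \<in> carrier G" and g: "g \<in> carrier G"
  shows "inv (commutator G a b) \<otimes> g = inv b \<otimes> inv a \<otimes> b \<otimes> (a \<otimes> g)"
proof -
  interpret group G by (rule grp)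
  show ?thesis using a b g unfolding commutator_def
    by (simp add: inv_mult_group m_assoc)
qed

lemma comm_sum: assumes g: "g \<in> carrier G"
  shows "(\<Sum>a\<in>carrier G. \<Sum>b\<in>carrier G. mat_trace (\<rho> (inv (commutator G a b) \<otimes> g)))
     = (of_nat N / of_nat n)^2 * mat_trace (\<rho> g)"
proof -
  have "(\<Sum>a\<in>carrier G. \<Sum>b\<in>carrier G. mat_trace (\<rho> (inv (commutator G a b) \<otimes> g)))
      = (\<Sum>a\<in>carrier G. \<Sum>b\<in>carrier G. mat_trace (\<rho> (inv b) * \<rho> (inv a) * \<rho> b * (\<rho> a * \<rho> g)))"
    using g by (intro sum.cong refl) (simp add: comm_inv hom)
  also have "\<dots> = (\<Sum>a\<in>carrier G. of_nat N / of_nat n * (mat_trace (\<rho> (inv a)) * mat_trace (\<rho> a * \<rho> g)))"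
    using g by (intro sum.cong refl, subst step1) (auto intro!: mult_carrier_mat)
  also have "\<dots> = of_nat N / of_nat n * (of_nat N / of_nat n * mat_trace (\<rho> g))"
    using g by (subst sum_distrib_left[symmetric], subst step2) auto
  finally show ?thesis by (simp add: power2_eq_square)
qed

lemma trace_one: "mat_trace (\<rho> \<one>) = of_nat n"
  unfolding one mat_trace_def by simp

end

lemma irr_char:
  fixes G (structure) and \<chi> :: "'a \<Rightarrow> complex"
  assumes grp: "group G" and fin: "finite (carrier G)" and chi: "\<chi> \<in> Irr G" and g: "g \<in> carrier G"
  shows "(\<Sum>a\<in>carrier G. \<Sum>b\<in>carrier G. \<chi> (inv\<^bsub>G\<^esub> (commutator G a b) \<otimes>\<^bsub>G\<^esub> g))
           = of_nat (card (carrier G))^2 / (\<chi> \<one>\<^bsub>G\<^esub>)^2 * \<chi> g"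
    and "\<exists>n>0. \<chi> \<one>\<^bsub>G\<^esub> = of_nat n"
proof -
  obtain n \<rho> where ir: "irreducible_rep G n \<rho>"
    and chi_def: "\<chi> = (\<lambda>g. if g \<in> carrier G then mat_trace (\<rho> g) else 0)"
    using chi unfolding Irr_def by auto
  interpret irrep G n \<rho> using grp fin ir by (simp add: irrep_def)
  interpret group G by (rule grp)
  have c1: "\<chi> \<one> = of_nat n" unfolding chi_def using trace_one by simp
  show "\<exists>n>0. \<chi> \<one>\<^bsub>G\<^esub> = of_nat n" using c1 npos by auto
  have "(\<Sum>a\<in>carrier G. \<Sum>b\<in>carrier G. \<chi> (inv (commutator G a b) \<otimes> g))
     = (\<Sum>a\<in>carrier G. \<Sum>b\<in>carrier G. mat_trace (\<rho> (inv (commutator G a b) \<otimes> g)))"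
    unfolding chi_def using g by (intro sum.cong refl) (simp add: commutator_def)
  also have "\<dots> = (of_nat N / of_nat n)^2 * mat_trace (\<rho> g)" by (rule comm_sum[OF g])
  also have "\<dots> = of_nat N^2 / (\<chi> \<one>)^2 * \<chi> g" unfolding c1 using g chi_def
    by (simp add: power_divide)
  finally show "(\<Sum>a\<in>carrier G. \<Sum>b\<in>carrier G. \<chi> (inv (commutator G a b) \<otimes> g))
           = of_nat N^2 / (\<chi> \<one>)^2 * \<chi> g" .
qed

theorem corollary1:
  fixes G (structure) and q :: nat and a :: "nat \<Rightarrow> real"
    and \<chi> :: "nat \<Rightarrow> 'a \<Rightarrow> complex" and \<phi> :: "'a \<Rightarrow> complex"
  assumes grp: "group G" and fin: "finite (carrier G)"
    and irr: "\<forall>i<q. \<chi> i \<in> Irr G"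
    and phi: "\<forall>h\<in>carrier G. \<phi> h = (\<Sum>i<q. complex_of_real (a i) * \<chi> i h)"
    and real_valued: "\<forall>h\<in>carrier G. \<phi> h \<in> \<real>"
  shows "(\<forall>g\<in>carrier G. complex_of_real (exp_xi G \<phi> g)
            = (\<Sum>i<q. complex_of_real (a i) / (\<chi> i \<one>)^2 * \<chi> i g))
    \<and> (inj_on \<chi> {..<q} \<and> (\<forall>h\<in>carrier G. Re (\<phi> h) \<ge> 0) \<and> (\<forall>i<q. a i \<ge> 0) \<and> (\<exists>i<q. a i \<noteq> 0)
         \<longrightarrow> (\<forall>g\<in>carrier G. comm_prob G g \<le> exp_xi G \<phi> g / Re (\<phi> \<one>)
            \<and> complex_of_real (exp_xi G \<phi> g / Re (\<phi> \<one>))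
              = (\<Sum>i<q. complex_of_real (a i) / (\<chi> i \<one>)^2 * \<chi> i g)
                / (\<Sum>i<q. complex_of_real (a i) * \<chi> i \<one>)))"
proof -
  interpret group G by (rule grp)
  define N where "N = card (carrier G)"
  have Npos: "N > 0" unfolding N_def using fin one_closed by (auto simp: card_gt_0_iff)
  have xcar: "inv (commutator G u v) \<otimes> g \<in> carrier G" if "u \<in> carrier G" "v \<in> carrier G" "g \<in> carrier G" for u v g
    using that unfolding commutator_def by simp
  have part1: "complex_of_real (exp_xi G \<phi> g) = (\<Sum>i<q. complex_of_real (a i) / (\<chi> i \<one>)^2 * \<chi> i g)"
    if g: "g \<in> carrier G" for g
  proof -
    have "complex_of_real (exp_xi G \<phi> g)
       = (\<Sum>u\<in>carrier G. \<Sum>v\<in>carrier G. complex_of_real (Re (\<phi> (inv (commutator G u v) \<otimes> g)))) / of_nat N^2"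
      unfolding exp_xi_def N_def by simp
    also have "\<dots> = (\<Sum>u\<in>carrier G. \<Sum>v\<in>carrier G. \<Sum>i<q. complex_of_real (a i) * \<chi> i (inv (commutator G u v) \<otimes> g)) / of_nat N^2"
    proof (intro arg_cong2[where f = "(/)"] sum.cong refl)
      fix u v assume u: "u \<in> carrier G" and v: "v \<in> carrier G"
      have y: "inv (commutator G u v) \<otimes> g \<in> carrier G" using xcar[OF u v g] .
      have "complex_of_real (Re (\<phi> (inv (commutator G u v) \<otimes> g))) = \<phi> (inv (commutator G u v) \<otimes> g)"
        by (rule of_real_Re) (use real_valued y in auto)
      also have "\<dots> = (\<Sum>i<q. complex_of_real (a i) * \<chi> i (inv (commutator G u v) \<otimes> g))"
        using phi y by auto
      finally show "complex_of_real (Re (\<phi> (inv (commutator G u v) \<otimes> g))) = (\<Sum>i<q. complex_of_real (a i) * \<chi> i (inv (commutator G u v) \<otimes> g))" .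
    qed
    also have "\<dots> = (\<Sum>i<q. complex_of_real (a i) * (\<Sum>u\<in>carrier G. \<Sum>v\<in>carrier G. \<chi> i (inv (commutator G u v) \<otimes> g))) / of_nat N^2"
      by (simp add: sum_distrib_left sum.swap[of _ "{..<q}"])
    also have "\<dots> = (\<Sum>i<q. complex_of_real (a i) * (of_nat N^2 / (\<chi> i \<one>)^2 * \<chi> i g)) / of_nat N^2"
      using irr_char(1)[OF grp fin _ g] irr unfolding N_def by (intro arg_cong2[where f = "(/)"] sum.cong refl) auto
    also have "\<dots> = (\<Sum>i<q. complex_of_real (a i) / (\<chi> i \<one>)^2 * \<chi> i g)"
      using Npos by (simp add: sum_divide_distrib)
    finally show ?thesis .
  qed
  moreover have "\<forall>g\<in>carrier G. comm_prob G g \<le> exp_xi G \<phi> g / Re (\<phi> \<one>)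
            \<and> complex_of_real (exp_xi G \<phi> g / Re (\<phi> \<one>))
              = (\<Sum>i<q. complex_of_real (a i) / (\<chi> i \<one>)^2 * \<chi> i g)
                / (\<Sum>i<q. complex_of_real (a i) * \<chi> i \<one>)"
    if nonneg: "\<forall>h\<in>carrier G. Re (\<phi> h) \<ge> 0" and apos: "\<forall>i<q. a i \<ge> 0" and ex: "\<exists>i<q. a i \<noteq> 0"
  proof (intro ballI conjI)
    fix g assume g: "g \<in> carrier G"
    have dims: "\<exists>n>0. \<chi> i \<one> = of_nat n" if "i < q" for i using irr_char(2)[OF grp fin] irr that by auto
    have Rdim: "Re (\<chi> i \<one>) > 0" if iq: "i < q" for i
    proof -
      obtain m where "m > 0" "\<chi> i \<one> = of_nat m" using dims[OF iq] by auto
      thus ?thesis by simp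
    qed
    have phi1: "\<phi> \<one> = (\<Sum>i<q. complex_of_real (a i) * \<chi> i \<one>)" using phi by simp
    have Rephi1: "Re (\<phi> \<one>) = (\<Sum>i<q. a i * Re (\<chi> i \<one>))" unfolding phi1 by (simp add: Re_sum)
    obtain j where j: "j < q" "a j \<noteq> 0" using ex by auto
    have "Re (\<phi> \<one>) \<ge> a j * Re (\<chi> j \<one>)" unfolding Rephi1
      using j apos Rdim by (intro member_le_sum) (auto intro!: mult_nonneg_nonneg simp: less_imp_le)
    moreover have "a j * Re (\<chi> j \<one>) > 0" using j apos Rdim[OF j(1)] by (auto intro!: mult_pos_pos)
    ultimately have pos: "Re (\<phi> \<one>) > 0" by linarith
    define S where "S = {(u, v). u \<in> carrier G \<and> v \<in> carrier G \<and> commutator G u v = g}"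
    have SS: "S \<subseteq> carrier G \<times> carrier G" unfolding S_def by auto
    have "real (card S) * Re (\<phi> \<one>) = (\<Sum>p\<in>S. Re (\<phi> (inv (commutator G (fst p) (snd p)) \<otimes> g)))"
    proof -
      have "(\<Sum>p\<in>S. Re (\<phi> (inv (commutator G (fst p) (snd p)) \<otimes> g))) = (\<Sum>p\<in>S. Re (\<phi> \<one>))"
        using g unfolding S_def by (intro sum.cong refl) (auto simp: l_inv)
      thus ?thesis by simp
    qed
    also have "\<dots> \<le> (\<Sum>p\<in>carrier G \<times> carrier G. Re (\<phi> (inv (commutator G (fst p) (snd p)) \<otimes> g)))"
      using SS fin nonneg xcar g by (intro sum_mono2) auto
    also have "\<dots> = (\<Sum>u\<in>carrier G. \<Sum>v\<in>carrier G. Re (\<phi> (inv (commutator G u v) \<otimes> g)))"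
      by (simp add: sum.cartesian_product split_beta)
    finally have le: "real (card S) * Re (\<phi> \<one>) \<le> (\<Sum>u\<in>carrier G. \<Sum>v\<in>carrier G. Re (\<phi> (inv (commutator G u v) \<otimes> g)))" .
    show "comm_prob G g \<le> exp_xi G \<phi> g / Re (\<phi> \<one>)"
      unfolding comm_prob_def exp_xi_def S_def[symmetric]
      using le pos Npos unfolding N_def by (simp add: field_simps)
    have "\<phi> \<one> = complex_of_real (Re (\<phi> \<one>))" using real_valued by simp
    thus "complex_of_real (exp_xi G \<phi> g / Re (\<phi> \<one>))
              = (\<Sum>i<q. complex_of_real (a i) / (\<chi> i \<one>)^2 * \<chi> i g)
                / (\<Sum>i<q. complex_of_real (a i) * \<chi> i \<one>)"
      using part1[OF g] phi1 by simp
  qed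
  ultimately show ?thesis by blast
qed

end
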